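(* Let $r\ge2$ and let $\tilde{\mathbf L}^{\mathrm{PD}}\in\mathbb R^{|\mathcal G_r|\times r!}$ be the matrix with rows indexed by $G\in\mathcal G_r$, columns indexed by $\sigma\in\Pi_r$, and entries \[ \tilde\ell^{\mathrm{PD}}(G,\sigma)=\sum_{i=1}^r\sum_{j=1}^{i-1}\Big(\mathbf 1\big((i,j)\in G\big)-\mathbf 1\big((j,i)\in G\big)\Big)\cdot\mathbf 1\big(\sigma(i)>\sigma(j)\big). \] Then $\operatorname{rank}(\tilde{\mathbf L}^{\mathrm{PD}})=\frac{r(r-1)}{2}$.
   Context: $\mathcal G_r$ is the set of all directed acyclic graphs on the vertex set $[r]=\{1,\dots,r\}$, viewed as sets of directed edges $(i,j)$; $\Pi_r$ is the set of all permutations (bijections) $\sigma:[r]\to[r]$, where $\sigma(i)$ is the position of element $i$; $\mathbf 1(\cdot)$ is the indicator function. *)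

theory Defs
  imports "HOL-Analysis.Analysis" "HOL-Combinatorics.Permutations" "HOL-Library.Function_Algebras"
begin

definition dags :: "nat \<Rightarrow> (nat \<times> nat) set set" where
  "dags r = {G. G \<subseteq> {1..r} \<times> {1..r} \<and> acyclic G}"

text \<open>Permutations of [r]; sigma i is the position of element i.\<close>
definition perms :: "nat \<Rightarrow> (nat \<Rightarrow> nat) set" where
  "perms r = {\<sigma>. \<sigma> permutes {1..r}}"

definition ind :: "bool \<Rightarrow> real" where
  "ind b = (if b then 1 else 0)"

definition lPD :: "nat \<Rightarrow> (nat \<times> nat) set \<Rightarrow> (nat \<Rightarrow> nat) \<Rightarrow> real" where
  "lPD r G \<sigma> = (\<Sum>i=1..r. \<Sum>j=1..i-1.
      (ind ((i,j) \<in> G) - ind ((j,i) \<in> G)) * ind (\<sigma> i > \<sigma> j))"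

definition row_PD :: "nat \<Rightarrow> (nat \<times> nat) set \<Rightarrow> ((nat \<Rightarrow> nat) \<Rightarrow> real)" where
  "row_PD r G = (\<lambda>\<sigma>. if \<sigma> \<in> perms r then lPD r G \<sigma> else 0)"

definition rank_PD :: "nat \<Rightarrow> nat" where
  "rank_PD r = vector_space.dim (\<lambda>(c::real) (f :: (nat \<Rightarrow> nat) \<Rightarrow> real). (\<lambda>x. c * f x))
                 (row_PD r ` dags r)"

end

theory Submission
  imports Defs
begin

lemma sum_fun_apply: "(sum g A) x = (\<Sum>a\<in>A. g a x)"
  for g :: "'b \<Rightarrow> 'c \<Rightarrow> 'd::comm_monoid_add"
  by (induction A rule: infinite_finite_induct) auto

interpretation vs: vector_space "\<lambda>(c::real) (f :: (nat \<Rightarrow> nat) \<Rightarrow> real). (\<lambda>x. c * f x)"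
  by unfold_locales (auto simp: fun_eq_iff algebra_simps)

definition Pairs :: "nat \<Rightarrow> (nat \<times> nat) set" where
  "Pairs r = Sigma {1..r} (\<lambda>i. {1..i-1})"

definition fP :: "nat \<Rightarrow> nat \<times> nat \<Rightarrow> (nat \<Rightarrow> nat) \<Rightarrow> real" where
  "fP r p = (\<lambda>\<sigma>. if \<sigma> \<in> perms r then ind (\<sigma> (fst p) > \<sigma> (snd p)) else 0)"

lemma finite_Pairs: "finite (Pairs r)" unfolding Pairs_def by auto

lemma lPD_Pairs: "lPD r G \<sigma> = (\<Sum>p\<in>Pairs r.
      (ind (p \<in> G) - ind ((snd p, fst p) \<in> G)) * ind (\<sigma> (fst p) > \<sigma> (snd p)))"
  unfolding lPD_def Pairs_def by (simp add: sum.Sigma split_def)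

lemma row_expand: "row_PD r G = (\<Sum>p\<in>Pairs r. (\<lambda>\<sigma>. (ind (p \<in> G) - ind ((snd p, fst p) \<in> G)) * fP r p \<sigma>))"
  by (auto simp: fun_eq_iff sum_fun_apply row_PD_def fP_def lPD_Pairs)

lemma row_single: assumes "p \<in> Pairs r" shows "row_PD r {p} = fP r p"
proof -
  obtain i j where p: "p = (i,j)" and ij: "j < i" using assms by (cases p) (auto simp: Pairs_def)
  have "row_PD r {p} = (\<Sum>q\<in>Pairs r. (if q = p then fP r q else 0))"
    unfolding row_expand
  proof (rule sum.cong[OF refl])
    fix q assume "q \<in> Pairs r"
    then have "snd q < fst q" by (auto simp: Pairs_def)
    then show "(\<lambda>\<sigma>. (ind (q \<in> {p}) - ind ((snd q, fst q) \<in> {p})) * fP r q \<sigma>) =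
          (if q = p then fP r q else 0)"
      using ij p by (auto simp: ind_def fun_eq_iff)
  qed
  also have "\<dots> = fP r p"
    using assms by (simp add: sum.delta' finite_Pairs)
  finally show ?thesis .
qed

lemma single_dag: assumes "p \<in> Pairs r" shows "{p} \<in> dags r"
proof -
  obtain i j where p: "p = (i,j)" and ij: "j < i" "1 \<le> j" "i \<le> r"
    using assms by (cases p) (auto simp: Pairs_def)
  have "acyclic (insert (i,j) {})" using ij by (subst acyclic_insert) (auto simp: acyclic_def)
  then show ?thesis using ij p by (auto simp: dags_def)
qed

lemma transpose12_order:
  fixes x y :: nat
  assumes "\<not> (x = 1 \<and> y = 2)" "\<not> (x = 2 \<and> y = 1)"
  shows "(Transposition.transpose 1 2 x < Transposition.transpose 1 2 y) = (x < y)"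
  using assms by (auto simp: Transposition.transpose_def)

lemma witness:
  assumes p: "p \<in> Pairs r"
  obtains s1 s2 where "\<And>q. q \<in> Pairs r \<Longrightarrow> q \<noteq> p \<Longrightarrow> fP r q s1 = fP r q s2"
    "fP r p s1 - fP r p s2 = 1"
proof -
  obtain i j where pe: "p = (i,j)" and ij: "j < i" "1 \<le> j" "i \<le> r"
    using p by (cases p) (auto simp: Pairs_def)
  define s1 where "s1 = Transposition.transpose 2 i \<circ> Transposition.transpose 1 j"
  define s2 where "s2 = Transposition.transpose 1 2 \<circ> s1"
  have in1: "s1 \<in> perms r" unfolding s1_def perms_def mem_Collect_eq
    using ij by (intro permutes_compose permutes_swap_id) auto
  have in2: "s2 \<in> perms r" unfolding s2_def perms_def mem_Collect_eq
    using ij in1 by (intro permutes_compose permutes_swap_id) (auto simp: perms_def)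
  have s1j: "s1 j = 1" and s1i: "s1 i = 2" using ij by (auto simp: s1_def Transposition.transpose_def)
  have inj1: "inj s1" unfolding s1_def by (simp add: inj_compose)
  have one: "s1 a = 1 \<longleftrightarrow> a = j" for a using inj1 s1j by (metis injD)
  have two: "s1 a = 2 \<longleftrightarrow> a = i" for a using inj1 s1i by (metis injD)
  show ?thesis
  proof
    fix q assume q: "q \<in> Pairs r" "q \<noteq> p"
    obtain a b where qe: "q = (a,b)" and ab: "b < a" using q by (cases q) (auto simp: Pairs_def)
    have "(s2 b < s2 a) = (s1 b < s1 a)" unfolding s2_def o_def
      apply (rule transpose12_order)
      using q qe pe ab ij one two by auto
    then show "fP r q s1 = fP r q s2" using in1 in2 qe by (simp add: fP_def)
  next
    have "s2 j = 2" "s2 i = 1" using s1i s1j by (auto simp: s2_def)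
    then show "fP r p s1 - fP r p s2 = 1" using in1 in2 pe s1i s1j by (simp add: fP_def ind_def)
  qed
qed

lemma fP_inj: "inj_on (fP r) (Pairs r)"
proof (rule inj_onI, rule ccontr)
  fix p q assume pq: "p \<in> Pairs r" "q \<in> Pairs r" "fP r p = fP r q" "p \<noteq> q"
  obtain s1 s2 where "\<And>q'. q' \<in> Pairs r \<Longrightarrow> q' \<noteq> p \<Longrightarrow> fP r q' s1 = fP r q' s2"
    "fP r p s1 - fP r p s2 = 1" using witness[OF pq(1)] by blast
  moreover have "fP r q s1 = fP r q s2" using calculation(1) pq by metis
  ultimately show False using pq(3) by simp
qed

lemma indep: "vs.independent (fP r ` Pairs r)"
proof -
  have "\<not> (\<exists>u. (\<exists>v \<in> fP r ` Pairs r. u v \<noteq> 0) \<and> (\<Sum>v\<in>fP r ` Pairs r. (\<lambda>x. u v * v x)) = 0)"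
  proof
    assume "\<exists>u. (\<exists>v \<in> fP r ` Pairs r. u v \<noteq> 0) \<and> (\<Sum>v\<in>fP r ` Pairs r. (\<lambda>x. u v * v x)) = 0"
    then obtain u p where p: "p \<in> Pairs r" and up: "u (fP r p) \<noteq> 0"
      and s: "(\<Sum>v\<in>fP r ` Pairs r. (\<lambda>x. u v * v x)) = 0" by blast
    have s': "(\<Sum>q\<in>Pairs r. u (fP r q) * fP r q x) = 0" for x
      using fun_cong[OF s, of x] fP_inj
      by (simp add: sum_fun_apply sum.reindex)
    obtain s1 s2 where w: "\<And>q. q \<in> Pairs r \<Longrightarrow> q \<noteq> p \<Longrightarrow> fP r q s1 = fP r q s2"
      "fP r p s1 - fP r p s2 = 1" using witness[OF p] by blast
    have "0 = (\<Sum>q\<in>Pairs r. u (fP r q) * fP r q s1) - (\<Sum>q\<in>Pairs r. u (fP r q) * fP r q s2)"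
      using s' by simp
    also have "\<dots> = (\<Sum>q\<in>Pairs r. u (fP r q) * (fP r q s1 - fP r q s2))"
      by (simp add: sum_subtractf algebra_simps)
    also have "\<dots> = (\<Sum>q\<in>Pairs r. if q = p then u (fP r p) else 0)"
      by (rule sum.cong) (use w in \<open>auto\<close>)
    also have "\<dots> = u (fP r p)" using p finite_Pairs by simp
    finally show False using up by simp
  qed
  then show ?thesis
    using vs.dependent_finite[of "fP r ` Pairs r"] finite_Pairs by blast
qed

lemma card_Pairs: "2 * card (Pairs r) = r * (r - 1)"
proof (induction r)
  case 0 then show ?case by (simp add: Pairs_def)
next
  case (Suc r)
  have "Pairs (Suc r) = Pairs r \<union> ({Suc r} \<times> {1..r})"
    by (auto simp: Pairs_def)
  moreover have "Pairs r \<inter> ({Suc r} \<times> {1..r}) = {}" by (auto simp: Pairs_def)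
  ultimately have "card (Pairs (Suc r)) = card (Pairs r) + r"
    using finite_Pairs by (simp add: card_Un_disjoint card_cartesian_product)
  then show ?case using Suc by (cases r) (auto simp: algebra_simps)
qed

theorem mainTheorem16:
  fixes r :: nat
  assumes "r \<ge> 2"
  shows "rank_PD r = r * (r - 1) div 2"
proof -
  have "rank_PD r = card (fP r ` Pairs r)"
    unfolding rank_PD_def
  proof (rule vs.dim_unique)
    show "fP r ` Pairs r \<subseteq> row_PD r ` dags r"
      using row_single single_dag by (metis (no_types, lifting) image_subset_iff rev_image_eqI)
    show "row_PD r ` dags r \<subseteq> vs.span (fP r ` Pairs r)"
    proof
      fix x assume "x \<in> row_PD r ` dags r"
      then obtain G where x: "x = row_PD r G" by blast
      show "x \<in> vs.span (fP r ` Pairs r)" unfolding x row_expand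
        by (intro vs.span_sum vs.span_scale vs.span_base) auto
    qed
  qed (use indep in auto)
  also have "\<dots> = card (Pairs r)" using fP_inj by (simp add: card_image)
  finally show ?thesis using card_Pairs[of r] by simp
qed

end
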